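(* For every graph $G$ on $n$ vertices, $G$ can be turned into a word-representable graph on the same vertex set by adding or deleting at most $\min\{|E(G)|/3,\ \binom n2-|E(G)|\}$ edges; that is, $\binom n2\,\mathrm{dist}(G,\mathcal H_{\rm word})\le\min\{|E(G)|/3,\binom n2-|E(G)|\}$. In particular $\mathrm{dist}(G,\mathcal H_{\rm word})\le 1/4$.
   Context: A word over alphabet $V$ represents a graph $G=(V,E)$ if for all distinct $x,y\in V$: $xy\in E$ iff the occurrences of $x$ and $y$ alternate in the word; $\mathcal H_{\rm word}$ is the class of graphs admitting such a word. For graphs $G,H$ on the same $n$-vertex set, $\mathrm{dist}(G,H)=|E(G)\triangle E(H)|/\binom n2$ and $\mathrm{dist}(G,\mathcal H)=\min\{\mathrm{dist}(G,H):H\in\mathcal H, V(H)=V(G)\}$. *)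

theory Defs
  imports Complex_Main
begin

definition simple_graph :: "'a set \<Rightarrow> 'a set set \<Rightarrow> bool" where
  "simple_graph V E \<longleftrightarrow> finite V \<and> (\<forall>e\<in>E. e \<subseteq> V \<and> card e = 2)"

definition alternate :: "'a list \<Rightarrow> 'a \<Rightarrow> 'a \<Rightarrow> bool" where
  "alternate w x y \<longleftrightarrow>
     (let u = filter (\<lambda>z. z = x \<or> z = y) w in
      \<forall>i. Suc i < length u \<longrightarrow> u ! i \<noteq> u ! Suc i)"

definition represents :: "'a list \<Rightarrow> 'a set \<Rightarrow> 'a set set \<Rightarrow> bool" where
  "represents w V E \<longleftrightarrow> set w = V \<and>
     (\<forall>x\<in>V. \<forall>y\<in>V. x \<noteq> y \<longrightarrow> ({x, y} \<in> E \<longleftrightarrow> alternate w x y))"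

definition word_representable :: "'a set \<Rightarrow> 'a set set \<Rightarrow> bool" where
  "word_representable V E \<longleftrightarrow> simple_graph V E \<and> (\<exists>w. represents w V E)"

definition graph_dist :: "'a set \<Rightarrow> 'a set set \<Rightarrow> 'a set set \<Rightarrow> real" where
  "graph_dist V E F = real (card ((E - F) \<union> (F - E))) / real (card V choose 2)"

definition dist_word :: "'a set \<Rightarrow> 'a set set \<Rightarrow> real" where
  "dist_word V E = Min {graph_dist V E F | F. word_representable V F}"

end

theory Submission
  imports Defs
begin


definition mono3 :: "('a \<Rightarrow> nat) \<Rightarrow> 'a set \<Rightarrow> bool" where
  "mono3 col e \<longleftrightarrow> (\<forall>x\<in>e. \<forall>y\<in>e. col x = col y)"

lemma coloring_exists:
  assumes "finite V" "\<forall>e\<in>E. e \<subseteq> V \<and> card e = 2"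
  shows "\<exists>col. (\<forall>z. col z < (3::nat)) \<and> 3 * card {e\<in>E. mono3 col e} \<le> card E"
  using assms
proof (induction V arbitrary: E rule: finite_induct)
  case empty
  have "e \<notin> E" for e
  proof
    assume "e \<in> E"
    then have "e = {}" "card e = 2" using empty by auto
    then show False by simp
  qed
  then have "E = {}" by blast
  then show ?case by (intro exI[of _ "\<lambda>_. 0"]) simp
next
  case (insert v V)
  define E1 where "E1 = {e\<in>E. v \<notin> e}"
  define E2 where "E2 = {e\<in>E. v \<in> e}"
  have finE: "finite E"
  proof (rule finite_subset)
    show "E \<subseteq> Pow (insert v V)" using insert.prems by auto
  qed (use insert.hyps in simp)
  have E1: "\<forall>e\<in>E1. e \<subseteq> V \<and> card e = 2" using insert.prems by (auto simp: E1_def)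
  from insert.IH[OF E1] obtain c0 where c0: "\<forall>z. c0 z < 3" "3 * card {e\<in>E1. mono3 c0 e} \<le> card E1"
    by blast
  have nb: "\<exists>u. u \<in> V \<and> u \<noteq> v \<and> e = {v,u}" if "e \<in> E2" for e
  proof -
    from that have "e \<in> E" "v \<in> e" by (auto simp: E2_def)
    with insert.prems have "card e = 2" "e \<subseteq> insert v V" by auto
    then obtain a b where ab: "e = {a,b}" "a \<noteq> b" by (auto simp: card_2_iff)
    show ?thesis
    proof (cases "v = a")
      case True
      then show ?thesis using ab \<open>e \<subseteq> insert v V\<close> by auto
    next
      case False
      then have "v = b" using ab \<open>v \<in> e\<close> by auto
      then show ?thesis using ab \<open>e \<subseteq> insert v V\<close> by auto
    qed
  qed
  define N where "N c = {e\<in>E2. mono3 (c0(v:=c)) e}" for c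
  have monoN: "mono3 (c0(v:=c)) {v,u} \<longleftrightarrow> c = c0 u" if "u \<noteq> v" for u c
    using that by (auto simp: mono3_def)
  have E2eq: "E2 = N 0 \<union> N 1 \<union> N 2"
  proof
    show "N 0 \<union> N 1 \<union> N 2 \<subseteq> E2" by (auto simp: N_def)
    show "E2 \<subseteq> N 0 \<union> N 1 \<union> N 2"
    proof
      fix e assume "e \<in> E2"
      then obtain u where u: "u\<in>V" "u\<noteq>v" "e = {v,u}" using nb by blast
      have "c0 u < 3" using c0(1) by blast
      then have "c0 u = 0 \<or> c0 u = 1 \<or> c0 u = 2" by auto
      moreover have "e \<in> N (c0 u)" using u \<open>e\<in>E2\<close> monoN[of u "c0 u"] by (simp add: N_def)
      ultimately show "e \<in> N 0 \<union> N 1 \<union> N 2" by (elim disjE) simp_all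
    qed
  qed
  have disj: "N i \<inter> N j = {}" if "i \<noteq> j" for i j
  proof -
    { fix e assume "e \<in> N i" "e \<in> N j"
      then have "e \<in> E2" by (auto simp: N_def)
      then obtain u where u: "u\<in>V" "u\<noteq>v" "e = {v,u}" using nb by blast
      have False using \<open>e \<in> N i\<close> \<open>e \<in> N j\<close> monoN[OF u(2)] u(3) that by (auto simp: N_def) }
    then show ?thesis by blast
  qed
  have finE2: "finite E2" using finE by (simp add: E2_def)
  have finN: "finite (N c)" for c using finE2 by (simp add: N_def)
  have "card E2 = card (N 0 \<union> N 1) + card (N 2)"
    unfolding E2eq by (rule card_Un_disjoint) (use finN disj[of 0 2] disj[of 1 2] in \<open>auto\<close>)
  also have "card (N 0 \<union> N 1) = card (N 0) + card (N 1)"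
    by (rule card_Un_disjoint) (use finN disj[of 0 1] in \<open>auto\<close>)
  finally have cardE2: "card E2 = card (N 0) + card (N 1) + card (N 2)" .
  obtain c where c: "c < 3" "3 * card (N c) \<le> card E2"
  proof -
    consider "3 * card (N 0) \<le> card E2" | "3 * card (N 1) \<le> card E2" | "3 * card (N 2) \<le> card E2"
      using cardE2 by linarith
    then show ?thesis
    proof cases
      case 1 then show ?thesis by (intro that[of 0]) auto
    next
      case 2 then show ?thesis by (intro that[of 1]) auto
    next
      case 3 then show ?thesis by (intro that[of 2]) auto
    qed
  qed
  have same: "mono3 (c0(v:=c)) e = mono3 c0 e" if "v \<notin> e" for e
    using that unfolding mono3_def by (metis fun_upd_other)
  have split: "{e\<in>E. mono3 (c0(v:=c)) e} = {e\<in>E1. mono3 c0 e} \<union> N c"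
    using same by (auto simp: E1_def E2_def N_def)
  have "card {e\<in>E. mono3 (c0(v:=c)) e} = card {e\<in>E1. mono3 c0 e} + card (N c)"
    unfolding split by (rule card_Un_disjoint) (auto simp: E1_def N_def E2_def finE finN)
  moreover have "card E = card E1 + card E2"
  proof -
    have "E = E1 \<union> E2" by (auto simp: E1_def E2_def)
    moreover have "card (E1 \<union> E2) = card E1 + card E2"
      by (rule card_Un_disjoint) (use finE in \<open>auto simp: E1_def E2_def\<close>)
    ultimately show ?thesis by simp
  qed
  ultimately have "3 * card {e\<in>E. mono3 (c0(v:=c)) e} \<le> card E"
    using c0(2) c(2) by linarith
  moreover have "\<forall>z. (c0(v:=c)) z < 3" using c0(1) c(1) by simp
  ultimately show ?case by blast
qed



definition pf :: "'a \<Rightarrow> 'a \<Rightarrow> 'a list \<Rightarrow> 'a list" where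
  "pf x y w = filter (\<lambda>z. z = x \<or> z = y) w"

lemma alternate_pf:
  "alternate w x y \<longleftrightarrow> (\<forall>i. Suc i < length (pf x y w) \<longrightarrow> pf x y w ! i \<noteq> pf x y w ! Suc i)"
  by (simp add: alternate_def pf_def Let_def)

lemma pf_sym: "pf x y w = pf y x w"
  unfolding pf_def by (rule filter_cong) auto

lemma alternate_sym: "alternate w x y = alternate w y x"
  by (simp add: alternate_pf pf_sym[of x y])

lemma pf_append[simp]: "pf x y (a @ b) = pf x y a @ pf x y b" by (simp add: pf_def)
lemma pf_Nil[simp]: "pf x y [] = []" by (simp add: pf_def)
lemma pf_Cons[simp]: "pf x y (a # l) = (if a = x \<or> a = y then a # pf x y l else pf x y l)"
  by (simp add: pf_def)
lemma pf_concat: "pf x y (concat ls) = concat (map (pf x y) ls)"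
  by (induction ls) auto

lemma pf_filter: "pf x y (filter R w) = filter R (pf x y w)"
  unfolding pf_def filter_filter by (rule filter_cong) auto

lemma filter_single: "distinct zs \<Longrightarrow> x \<in> set zs \<Longrightarrow> filter (\<lambda>z. z = x) zs = [x]"
  by (induction zs) (auto simp: filter_empty_conv)

definition Pof :: "('a \<Rightarrow> nat) \<Rightarrow> 'a list \<Rightarrow> 'a list" where
  "Pof col zs = filter (\<lambda>z. col z = 0) zs @ filter (\<lambda>z. col z = 1) zs @ filter (\<lambda>z. col z = 2) zs"

lemma set_Pof: "\<forall>z. col z < (3::nat) \<Longrightarrow> set (Pof col zs) = set zs"
proof -
  assume a: "\<forall>z. col z < (3::nat)"
  have "col z = 0 \<or> col z = 1 \<or> col z = 2" for z
  proof -
    have "col z < 3" using a by blast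
    then show ?thesis by auto
  qed
  then have "\<forall>z. col z = 0 \<or> col z = 1 \<or> col z = 2" by blast
  then show ?thesis unfolding Pof_def set_append set_filter by blast
qed

lemma pf_Pof_lt:
  assumes "distinct zs" "x \<in> set zs" "y \<in> set zs" "col x < col y" "col y < (3::nat)"
  shows "pf x y (Pof col zs) = [x,y]"
proof -
  have f: "filter (\<lambda>z. col z = k \<and> (z = x \<or> z = y)) zs
        = (if k = col x then [x] else if k = col y then [y] else [])" for k
  proof -
    consider "k = col x" | "k = col y" | "k \<noteq> col x" "k \<noteq> col y" by blast
    then show ?thesis
    proof cases
      case 1
      then have "filter (\<lambda>z. col z = k \<and> (z = x \<or> z = y)) zs = filter (\<lambda>z. z = x) zs"
        using assms(4) by (intro filter_cong) auto
      then show ?thesis using 1 filter_single assms by simp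
    next
      case 2
      then have "filter (\<lambda>z. col z = k \<and> (z = x \<or> z = y)) zs = filter (\<lambda>z. z = y) zs"
        using assms(4) by (intro filter_cong) auto
      then show ?thesis using 2 filter_single assms by simp
    next
      case 3
      then have "filter (\<lambda>z. col z = k \<and> (z = x \<or> z = y)) zs = []"
        by (auto simp: filter_empty_conv)
      then show ?thesis using 3 by simp
    qed
  qed
  have "col x = 0 \<and> col y = 1 \<or> col x = 0 \<and> col y = 2 \<or> col x = 1 \<and> col y = 2"
    using assms(4,5) by auto
  then show ?thesis unfolding Pof_def pf_def filter_append filter_filter
    apply (simp only: f)
    apply (elim disjE conjE)
     apply simp_all
    done
qed

lemma pf_Pof_eq:
  assumes "col x = col y" "col x < (3::nat)"
  shows "pf x y (Pof col zs) = pf x y zs"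
proof -
  have f: "filter (\<lambda>z. col z = k \<and> (z = x \<or> z = y)) zs = (if k = col x then filter (\<lambda>z. z = x \<or> z = y) zs else [])" for k
  proof (cases "k = col x")
    case True
    then show ?thesis using assms(1) by (simp, intro filter_cong) auto
  next
    case False
    then show ?thesis using assms(1) by (auto simp: filter_empty_conv)
  qed
  have "col x = 0 \<or> col x = 1 \<or> col x = 2" using assms(2) by auto
  then show ?thesis unfolding Pof_def pf_append unfolding pf_def filter_filter
    apply (simp only: f)
    apply (elim disjE)
      apply simp_all
    done
qed

lemma nth_alt: "i < 2*m \<Longrightarrow> concat (replicate m [x,y]) ! i = (if even i then x else y)"
proof (induction m arbitrary: i)
  case 0 then show ?case by simp
next
  case (Suc m)
  note IH = Suc.IH
  note prem = Suc.prems
  show ?case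
  proof (cases i)
    case 0 then show ?thesis by simp
  next
    case (Suc j)
    note ij = this
    show ?thesis
    proof (cases j)
      case 0 then show ?thesis using ij by simp
    next
      case (Suc k)
      then show ?thesis using IH[of k] prem ij by simp
    qed
  qed
qed

lemma rep4: "concat (replicate m [x,y,x,y]) = concat (replicate (2*m) [x,y])"
  by (induction m) auto

lemma alt_rep:
  assumes "x \<noteq> y" "pf x y w = concat (replicate m [x,y])"
  shows "alternate w x y"
  unfolding alternate_pf assms(2)
proof (intro allI impI)
  fix i assume "Suc i < length (concat (replicate m [x,y]))"
  then have "Suc i < 2 * m" by (simp add: length_concat sum_list_replicate)
  then show "concat (replicate m [x,y]) ! i \<noteq> concat (replicate m [x,y]) ! Suc i"
    using nth_alt[of i m x y] nth_alt[of "Suc i" m x y] assms(1) by auto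
qed

lemma not_alt:
  assumes "pf x y w = a @ b # b # c"
  shows "\<not> alternate w x y"
proof
  assume "alternate w x y"
  hence h: "\<forall>i. Suc i < length (pf x y w) \<longrightarrow> pf x y w ! i \<noteq> pf x y w ! Suc i"
    unfolding alternate_pf .
  have l: "Suc (length a) < length (pf x y w)" using assms by simp
  have e1: "(a @ b # b # c) ! length a = b" by (simp add: nth_append)
  have e2: "(a @ b # b # c) ! Suc (length a) = b" using nth_append_length_plus[of a "b#b#c" 1] by simp
  show False using h[rule_format, OF l] e1 e2 assms by simp
qed

lemma pf_two:
  assumes "distinct zs" "x \<in> set zs" "y \<in> set zs" "x \<noteq> y"
  obtains p r where "pf x y zs = [p,r]" "p \<noteq> r"
proof -
  have d: "distinct (pf x y zs)" using assms(1) by (simp add: pf_def)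
  have "set (pf x y zs) = {x,y}" using assms by (auto simp: pf_def)
  then have "length (pf x y zs) = 2" using distinct_card[OF d] assms(4) by simp
  moreover have "\<exists>p r. l = [p,r]" if "length l = 2" for l :: "'a list"
  proof (cases l)
    case Nil then show ?thesis using that by simp
  next
    case (Cons p t) then show ?thesis using that by (cases t) auto
  qed
  ultimately obtain p r where "pf x y zs = [p,r]" by blast
  moreover then have "p \<noteq> r" using d by simp
  ultimately show ?thesis using that by blast
qed



lemma Rd_calc:
  assumes "col u < col v" "col y = Suc (col x)" "u \<noteq> v" "\<not>(u = x \<and> v = y)" "\<not>(u = y \<and> v = x)"
  shows "filter (\<lambda>z. col z < col y \<and> z \<noteq> x) [u,v] @ pf u v [y,x] @ filter (\<lambda>z. col y \<le> col z \<and> z \<noteq> y) [u,v] = [u,v]"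
  using assms by (cases "u = x"; cases "v = x"; cases "u = y"; cases "v = y") auto

lemma Gd_calc:
  assumes "col u < col v" "col x = 0" "col y = (2::nat)" "col v < 3" "u \<noteq> v" "\<not>(u = x \<and> v = y)" "\<not>(u = y \<and> v = x)"
  shows "filter (\<lambda>z. z \<noteq> y) [u,v] @ pf u v [x,y] @ filter (\<lambda>z. z \<noteq> x) [u,v] = [u,v,u,v]"
  using assms by (cases "u = x"; cases "v = x"; cases "u = y"; cases "v = y") auto



lemma complete_wr:
  assumes "finite V"
  shows "word_representable V {e. e \<subseteq> V \<and> card e = 2}"
proof -
  obtain xs where xs: "set xs = V" "distinct xs" using finite_distinct_list[OF assms] by blast
  have "represents xs V {e. e \<subseteq> V \<and> card e = 2}"
    unfolding represents_def
  proof (intro conjI ballI impI)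
    show "set xs = V" by (rule xs(1))
    fix x y assume xy: "x \<in> V" "y \<in> V" "x \<noteq> y"
    obtain p r where pr: "pf x y xs = [p,r]" "p \<noteq> r" using pf_two[of xs x y] xs xy by blast
    have "alternate xs x y" unfolding alternate_pf pr using pr(2) by (auto simp: less_Suc_eq)
    moreover have "{x,y} \<in> {e. e \<subseteq> V \<and> card e = 2}" using xy by auto
    ultimately show "({x, y} \<in> {e. e \<subseteq> V \<and> card e = 2}) = alternate xs x y" by blast
  qed
  moreover have "simple_graph V {e. e \<subseteq> V \<and> card e = 2}" using assms by (simp add: simple_graph_def)
  ultimately show ?thesis unfolding word_representable_def by blast
qed

lemma tripartite_wr:
  assumes fin: "finite V" and sg: "\<forall>e\<in>E. e \<subseteq> V \<and> card e = 2" and col3: "\<forall>z. col z < (3::nat)"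
  shows "word_representable V {e\<in>E. \<not> mono3 col e}"
proof -
  obtain xs where xs: "set xs = V" "distinct xs" using finite_distinct_list[OF fin] by blast
  define F where "F = {e\<in>E. \<not> mono3 col e}"
  define P where "P = Pof col xs"
  define P' where "P' = Pof col (rev xs)"
  define Gd where "Gd x y = filter (\<lambda>z. z \<noteq> y) P @ [x, y] @ filter (\<lambda>z. z \<noteq> x) P" for x y
  define Rd where "Rd x y = P @ filter (\<lambda>z. col z < col y \<and> z \<noteq> x) P @ [y, x] @ filter (\<lambda>z. col y \<le> col z \<and> z \<noteq> y) P" for x y
  define gad where "gad p = (if col (snd p) = Suc (col (fst p)) then Rd (fst p) (snd p) else Gd (fst p) (snd p))" for p
  define ps where "ps = filter (\<lambda>p. col (fst p) < col (snd p) \<and> {fst p, snd p} \<notin> E) (List.product xs xs)"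
  define w where "w = (P @ P') @ concat (map gad ps)"
  have setP: "set P = V" "set P' = V" using set_Pof[OF col3] xs by (auto simp: P_def P'_def)
  have ps_mem: "p \<in> set ps \<longleftrightarrow> fst p \<in> V \<and> snd p \<in> V \<and> col (fst p) < col (snd p) \<and> {fst p, snd p} \<notin> E" for p
    by (cases p) (auto simp: ps_def xs(1))
  have setgad: "set (gad p) \<subseteq> V" if "p \<in> set ps" for p
    using that setP ps_mem[of p] by (auto simp: gad_def Rd_def Gd_def)
  have setw: "set w = V"
    using setgad setP by (auto simp: w_def)
  have monoxy: "mono3 col {x,y} \<longleftrightarrow> col x = col y" for x y by (auto simp: mono3_def)
  have Fxy: "{x,y} \<in> F \<longleftrightarrow> {x,y} \<in> E \<and> col x \<noteq> col y" for x y by (auto simp: F_def monoxy)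
  have edge: "alternate w u v" if uv: "u \<in> V" "v \<in> V" "col u < col v" "{u,v} \<in> E" for u v
  proof -
    have uneq: "u \<noteq> v" using uv(3) by auto
    have pP: "pf u v P = [u,v]" unfolding P_def using pf_Pof_lt[of xs u v col] xs uv col3 by auto
    have pP': "pf u v P' = [u,v]" unfolding P'_def using pf_Pof_lt[of "rev xs" u v col] xs uv col3 by auto
    have g: "pf u v (gad p) = [u,v,u,v]" if p: "p \<in> set ps" for p
    proof -
      obtain x y where pxy: "p = (x,y)" by (cases p)
      have x: "x \<in> V" "y \<in> V" "col x < col y" "{x,y} \<notin> E" using ps_mem[of p] p pxy by auto
      have n1: "\<not> (u = x \<and> v = y)" using x(4) uv(4) by auto
      have n2: "\<not> (u = y \<and> v = x)" using x(4) uv(4) by (auto simp: insert_commute)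
      have cy: "col y < 3" "col v < 3" using col3 by auto
      show ?thesis
      proof (cases "col y = Suc (col x)")
        case True
        have "pf u v (gad p) = pf u v (Rd x y)" using True pxy by (simp add: gad_def)
        also have "\<dots> = [u,v] @ (filter (\<lambda>z. col z < col y \<and> z \<noteq> x) [u,v] @ pf u v [y,x] @ filter (\<lambda>z. col y \<le> col z \<and> z \<noteq> y) [u,v])"
          unfolding Rd_def by (simp only: pf_append pf_filter pP)
        also have "\<dots> = [u,v] @ [u,v]"
          unfolding Rd_calc[of col u v y x, OF uv(3) True uneq n1 n2] ..
        finally show ?thesis by simp
      next
        case False
        then have c02: "col x = 0" "col y = 2" using x(3) cy by auto
        have "pf u v (gad p) = pf u v (Gd x y)" using False pxy by (simp add: gad_def)
        also have "\<dots> = filter (\<lambda>z. z \<noteq> y) [u,v] @ pf u v [x,y] @ filter (\<lambda>z. z \<noteq> x) [u,v]"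
          unfolding Gd_def by (simp only: pf_append pf_filter pP)
        also have "\<dots> = [u,v,u,v]"
          by (rule Gd_calc[of col u v x y, OF uv(3) c02 cy(2) uneq n1 n2])
        finally show ?thesis .
      qed
    qed
    have "pf u v w = [u,v,u,v] @ concat (map (pf u v \<circ> gad) ps)"
      by (simp add: w_def pP pP' pf_concat)
    also have "map (pf u v \<circ> gad) ps = map (\<lambda>_. [u,v,u,v]) ps" using g by (intro map_cong) auto
    also have "\<dots> = replicate (length ps) [u,v,u,v]" by (simp add: map_replicate_const)
    finally have "pf u v w = concat (replicate (Suc (length ps)) [u,v,u,v])" by simp
    then have "pf u v w = concat (replicate (2 * Suc (length ps)) [u,v])" by (simp only: rep4)
    then show ?thesis by (rule alt_rep[OF uneq])
  qed
  have samecol: "\<not> alternate w x y" if sxy: "x \<in> V" "y \<in> V" "x \<noteq> y" "col x = col y" for x y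
  proof -
    obtain p r where pr: "pf x y xs = [p,r]" "p \<noteq> r" using pf_two[of xs x y] xs sxy by blast
    have "pf x y P = [p,r]" using pf_Pof_eq[of col x y xs] sxy col3 pr by (simp add: P_def)
    moreover have "pf x y P' = [r,p]" using pf_Pof_eq[of col x y "rev xs"] sxy col3 pr
      by (simp add: P'_def pf_def rev_filter[symmetric])
    ultimately have "pf x y w = [p] @ r # r # ([p] @ pf x y (concat (map gad ps)))" by (simp add: w_def)
    then show ?thesis by (rule not_alt)
  qed
  have cross: "\<not> alternate w x y" if xy: "x \<in> V" "y \<in> V" "col x < col y" "{x,y} \<notin> E" for x y
  proof -
    have "(x,y) \<in> set ps" using ps_mem xy by auto
    then obtain ps1 ps2 where ps: "ps = ps1 @ (x,y) # ps2" by (meson split_list)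
    have pP: "pf x y P = [x,y]" unfolding P_def using pf_Pof_lt[of xs x y col] xs xy col3 by auto
    have "\<exists>a b c. pf x y (gad (x,y)) = a @ b # b # c"
    proof (cases "col y = Suc (col x)")
      case True
      have "pf x y (gad (x,y)) = pf x y (Rd x y)" using True by (simp add: gad_def)
      also have "\<dots> = [x,y] @ (filter (\<lambda>z. col z < col y \<and> z \<noteq> x) [x,y] @ pf x y [y,x] @ filter (\<lambda>z. col y \<le> col z \<and> z \<noteq> y) [x,y])"
        unfolding Rd_def by (simp only: pf_append pf_filter pP)
      also have "\<dots> = [x] @ y # y # [x]" using xy(3) by auto
      finally show ?thesis by blast
    next
      case False
      have "pf x y (gad (x,y)) = pf x y (Gd x y)" using False by (simp add: gad_def)
      also have "\<dots> = filter (\<lambda>z. z \<noteq> y) [x,y] @ pf x y [x,y] @ filter (\<lambda>z. z \<noteq> x) [x,y]"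
        unfolding Gd_def by (simp only: pf_append pf_filter pP)
      also have "\<dots> = [] @ x # x # [y,y]" using xy(3) by auto
      finally show ?thesis by blast
    qed
    then obtain a b c where abc: "pf x y (gad (x,y)) = a @ b # b # c" by blast
    have "pf x y w = (pf x y (P @ P' @ concat (map gad ps1)) @ a) @ b # b # (c @ pf x y (concat (map gad ps2)))"
      by (simp add: w_def ps abc)
    then show ?thesis by (rule not_alt)
  qed
  have "represents w V F"
    unfolding represents_def
  proof (intro conjI ballI impI)
    show "set w = V" by (rule setw)
    fix x y assume xy: "x \<in> V" "y \<in> V" "x \<noteq> y"
    show "({x,y} \<in> F) = alternate w x y"
    proof (cases "{x,y} \<in> E \<and> col x \<noteq> col y")
      case ec: True
      have "alternate w x y"
      proof (cases "col x < col y")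
        case True then show ?thesis using edge xy ec by auto
      next
        case False then have "col y < col x" using ec by auto
        then have "alternate w y x" using edge[of y x] xy ec by (auto simp: insert_commute)
        then show ?thesis using alternate_sym[of w x y] by simp
      qed
      then show ?thesis using ec Fxy by auto
    next
      case nc: False
      have "\<not> alternate w x y"
      proof (cases "col x = col y")
        case True then show ?thesis using samecol xy by auto
      next
        case ne: False
        then have nE: "{x,y} \<notin> E" using nc by auto
        show ?thesis
        proof (cases "col x < col y")
          case True then show ?thesis using cross xy nE by auto
        next
          case False then have "col y < col x" using ne by auto
          then have "\<not> alternate w y x" using cross[of y x] xy nE by (auto simp: insert_commute)
          then show ?thesis using alternate_sym[of w x y] by simp
        qed
      qed
      then show ?thesis using nc Fxy by auto
    qed
  qed
  moreover have "simple_graph V F" using fin sg by (auto simp: simple_graph_def F_def)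
  ultimately show ?thesis unfolding word_representable_def F_def by blast
qed



theorem mainTheorem4:
  fixes V :: "'a set" and E :: "'a set set"
  assumes "simple_graph V E"
  shows "(\<exists>F. word_representable V F \<and>
            real (card ((E - F) \<union> (F - E)))
              \<le> min (real (card E) / 3) (real (card V choose 2) - real (card E)))
       \<and> real (card V choose 2) * dist_word V E
           \<le> min (real (card E) / 3) (real (card V choose 2) - real (card E))
       \<and> dist_word V E \<le> 1 / 4"
proof -
  have fin: "finite V" and sg: "\<forall>e\<in>E. e \<subseteq> V \<and> card e = 2"
    using assms by (auto simp: simple_graph_def)
  define K where "K = {e. e \<subseteq> V \<and> card e = 2}"
  define N where "N = card V choose 2"
  have cardK: "card K = N" unfolding K_def N_def by (rule n_subsets[OF fin])
  have finK: "finite K"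
  proof (rule finite_subset)
    show "K \<subseteq> Pow V" by (auto simp: K_def)
  qed (use fin in simp)
  have EK: "E \<subseteq> K" using sg by (auto simp: K_def)
  have finE: "finite E" using finK EK finite_subset by blast
  have mN: "card E \<le> N" using card_mono[OF finK EK] cardK by simp
  define M where "M = min (real (card E) / 3) (real N - real (card E))"
  obtain col where col: "\<forall>z. col z < (3::nat)" "3 * card {e\<in>E. mono3 col e} \<le> card E"
    using coloring_exists[OF fin sg] by blast
  define F3 where "F3 = {e\<in>E. \<not> mono3 col e}"
  have d3: "(E - F3) \<union> (F3 - E) = {e\<in>E. mono3 col e}" by (auto simp: F3_def)
  have dK: "(E - K) \<union> (K - E) = K - E" using EK by auto
  have cK: "card (K - E) = N - card E" using card_Diff_subset[OF finE EK] cardK by simp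
  have ex: "\<exists>F. word_representable V F \<and> real (card ((E - F) \<union> (F - E))) \<le> M"
  proof (cases "real (card E) / 3 \<le> real N - real (card E)")
    case True
    have "real (3 * card {e\<in>E. mono3 col e}) \<le> real (card E)" using col(2) by linarith
    then have "real (card ((E - F3) \<union> (F3 - E))) \<le> real (card E) / 3" unfolding d3 by simp
    then show ?thesis using True tripartite_wr[OF fin sg col(1)] unfolding M_def F3_def by auto
  next
    case False
    have "real (card ((E - K) \<union> (K - E))) = real N - real (card E)" unfolding dK cK using mN by simp
    then show ?thesis using False complete_wr[OF fin] unfolding M_def K_def by auto
  qed
  then obtain F0 where F0: "word_representable V F0" "real (card ((E - F0) \<union> (F0 - E))) \<le> M" by blast
  have M0: "0 \<le> M" using mN by (simp add: M_def)
  have M4: "M \<le> real N / 4" unfolding M_def min_def by (split if_split) linarith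
  define S where "S = {graph_dist V E F | F. word_representable V F}"
  have finS: "finite S"
  proof -
    have "S \<subseteq> graph_dist V E ` Pow K" unfolding S_def K_def word_representable_def simple_graph_def by auto
    then show ?thesis using finK by (auto intro: finite_subset)
  qed
  have inS: "graph_dist V E F0 \<in> S" using F0 unfolding S_def by blast
  have dle: "dist_word V E \<le> graph_dist V E F0"
    unfolding dist_word_def S_def[symmetric] using Min_le[OF finS inS] .
  have gd: "graph_dist V E F0 = real (card ((E - F0) \<union> (F0 - E))) / real N"
    by (simp add: graph_dist_def N_def)
  have p2: "real N * dist_word V E \<le> M"
  proof (cases "N = 0")
    case True then show ?thesis using M0 by simp
  next
    case False
    then have "real N * dist_word V E \<le> real N * graph_dist V E F0" using dle by simp
    also have "\<dots> = real (card ((E - F0) \<union> (F0 - E)))" using False gd by simp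
    finally show ?thesis using F0(2) by linarith
  qed
  have p3: "dist_word V E \<le> 1 / 4"
  proof (cases "N = 0")
    case True then show ?thesis using dle gd by simp
  next
    case False
    have "graph_dist V E F0 \<le> (real N / 4) / real N" unfolding gd
      using F0(2) M4 False by (intro divide_right_mono) auto
    also have "\<dots> = 1 / 4" using False by simp
    finally show ?thesis using dle by linarith
  qed
  show ?thesis using ex p2 p3 unfolding M_def N_def by blast
qed

end
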